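(* Let $C$ be a Cantor fan and let $L\subseteq C$ be a subcontinuum of $C$ that is a Lelek fan. Then $L$ is nowhere dense in $C$, i.e. $\mathrm{Int}_C(\mathrm{Cl}_C(L))=\emptyset$.
   Context: A continuum is a nonempty compact connected metric space. A dendroid is an arcwise connected, hereditarily unicoherent continuum. A point $x$ of a dendroid $X$ is a ramification point if $x$ is the top (the branch point) of some simple triod in $X$. A fan is a dendroid with at most one ramification point; this point, if it exists, is called the top of the fan. For a fan $X$, a point $x$ is an end point of $X$ if $x$ is an end point of every arc in $X$ containing $x$; $E(X)$ denotes the set of end points of $X$. A fan $X$ with top $v$ is smooth if for every $x\in X$ and every sequence $x_n\to x$ in $X$, the arcs from $v$ to $x_n$ converge (in the Hausdorff metric) to the arc from $v$ to $x$. A Lelek fan is a smooth fan $X$ with $\mathrm{Cl}(E(X))=X$. A Cantor fan is a continuum homeomorphic to $\bigcup_{c\in C}A_c\subseteq\mathbb R^2$, where $C\subseteq[0,1]$ is the Cantor middle-third set and $A_c$ is the straight segment from $(\tfrac12,0)$ to $(c,1)$. *)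

theory Defs
  imports "HOL-Analysis.Analysis"
begin

primrec cantor_level :: "nat \<Rightarrow> real set" where
  "cantor_level 0 = {0..1}"
| "cantor_level (Suc n) = (\<lambda>x. x / 3) ` cantor_level n \<union> (\<lambda>x. x / 3 + 2 / 3) ` cantor_level n"

definition cantor_set :: "real set" where
  "cantor_set = (\<Inter>n. cantor_level n)"

definition standard_cantor_fan :: "(real \<times> real) set" where
  "standard_cantor_fan = (\<Union>c\<in>cantor_set. closed_segment (1/2, 0) (c, 1))"

definition cantor_fan :: "'a::topological_space set \<Rightarrow> bool" where
  "cantor_fan X \<longleftrightarrow> X homeomorphic standard_cantor_fan"

definition continuum :: "'a::topological_space set \<Rightarrow> bool" where
  "continuum X \<longleftrightarrow> X \<noteq> {} \<and> compact X \<and> connected X"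

definition arc_in :: "'a::topological_space set \<Rightarrow> (real \<Rightarrow> 'a) \<Rightarrow> bool" where
  "arc_in X g \<longleftrightarrow> arc g \<and> path_image g \<subseteq> X"

definition arcwise_connected :: "'a::topological_space set \<Rightarrow> bool" where
  "arcwise_connected X \<longleftrightarrow>
     (\<forall>x\<in>X. \<forall>y\<in>X. x \<noteq> y \<longrightarrow> (\<exists>g. arc_in X g \<and> pathstart g = x \<and> pathfinish g = y))"

definition hereditarily_unicoherent :: "'a::topological_space set \<Rightarrow> bool" where
  "hereditarily_unicoherent X \<longleftrightarrow>
     (\<forall>A B. A \<subseteq> X \<longrightarrow> B \<subseteq> X \<longrightarrow> continuum A \<longrightarrow> continuum B \<longrightarrow> connected (A \<inter> B))"

definition dendroid :: "'a::topological_space set \<Rightarrow> bool" where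
  "dendroid X \<longleftrightarrow> continuum X \<and> arcwise_connected X \<and> hereditarily_unicoherent X"

text \<open>x is the top (branch point) of a simple triod in X: three arcs in X emanating
  from x, pairwise meeting only in x.\<close>
definition ramification_point :: "'a::topological_space set \<Rightarrow> 'a \<Rightarrow> bool" where
  "ramification_point X x \<longleftrightarrow>
     (\<exists>g1 g2 g3. arc_in X g1 \<and> arc_in X g2 \<and> arc_in X g3 \<and>
        pathstart g1 = x \<and> pathstart g2 = x \<and> pathstart g3 = x \<and>
        path_image g1 \<inter> path_image g2 = {x} \<and>
        path_image g1 \<inter> path_image g3 = {x} \<and>
        path_image g2 \<inter> path_image g3 = {x})"

definition fan :: "'a::topological_space set \<Rightarrow> bool" where
  "fan X \<longleftrightarrow> dendroid X \<and> (\<forall>x y. ramification_point X x \<longrightarrow> ramification_point X y \<longrightarrow> x = y)"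

definition end_points :: "'a::topological_space set \<Rightarrow> 'a set" where
  "end_points X = {x\<in>X. \<forall>g. arc_in X g \<and> x \<in> path_image g \<longrightarrow> x = pathstart g \<or> x = pathfinish g}"

text \<open>The (unique, in a dendroid) arc in X from v to x; the degenerate arc {v} if x = v.\<close>
definition arc_between :: "'a::topological_space set \<Rightarrow> 'a \<Rightarrow> 'a \<Rightarrow> 'a set" where
  "arc_between X v x =
     (if x = v then {v}
      else (THE A. \<exists>g. arc_in X g \<and> pathstart g = v \<and> pathfinish g = x \<and> A = path_image g))"

definition hausdorff_dist :: "'a::metric_space set \<Rightarrow> 'a set \<Rightarrow> real" where
  "hausdorff_dist A B = max (SUP a\<in>A. infdist a B) (SUP b\<in>B. infdist b A)"

definition smooth_fan :: "'a::metric_space set \<Rightarrow> 'a \<Rightarrow> bool" where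
  "smooth_fan X v \<longleftrightarrow> fan X \<and> ramification_point X v \<and>
     (\<forall>x\<in>X. \<forall>s::nat \<Rightarrow> 'a. (\<forall>n. s n \<in> X) \<longrightarrow> s \<longlonglongrightarrow> x \<longrightarrow>
        (\<lambda>n. hausdorff_dist (arc_between X v (s n)) (arc_between X v x)) \<longlonglongrightarrow> 0)"

definition lelek_fan :: "'a::metric_space set \<Rightarrow> bool" where
  "lelek_fan X \<longleftrightarrow> (\<exists>v. smooth_fan X v) \<and> closure (end_points X) = X"

end

theory Submission imports Defs begin

lemma seg_interior:
  fixes v p w :: "'b::real_normed_vector"
  assumes w: "w = (1-t) *\<^sub>R v + t *\<^sub>R p" and t: "0<t" "t<1" and e: "\<epsilon>>0" and vp: "v\<noteq>p"
  shows "\<exists>a b. a\<noteq>b \<and> closed_segment a b \<subseteq> closed_segment v p \<and> closed_segment a b \<subseteq> ball w \<epsilon>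
     \<and> w \<in> closed_segment a b \<and> w \<noteq> a \<and> w \<noteq> b"
proof -
  define n where "n = norm (p - v)"
  have n: "n > 0" using vp by (simp add: n_def)
  define d where "d = min (min t (1-t)) (\<epsilon> / (2*n)) / 2"
  have d0: "d > 0" using t e n by (simp add: d_def)
  have d1: "d < t" "d < 1 - t" using t d0 by (auto simp: d_def)
  have dn: "d * n < \<epsilon>"
  proof -
    have "d \<le> \<epsilon> / (2*n) / 2" by (simp add: d_def)
    hence "d * n \<le> \<epsilon> / (2*n) / 2 * n" using n mult_right_mono[of d "\<epsilon> / (2*n) / 2" n] by linarith
    also have "\<dots> = \<epsilon>/4" using n by (simp add: field_simps)
    finally show ?thesis using e by simp
  qed
  define a where "a = (1-(t-d)) *\<^sub>R v + (t-d) *\<^sub>R p"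
  define b where "b = (1-(t+d)) *\<^sub>R v + (t+d) *\<^sub>R p"
  have wa: "w - a = d *\<^sub>R (p - v)" unfolding w a_def by (simp add: algebra_simps)
  have wb: "b - w = d *\<^sub>R (p - v)" unfolding w b_def by (simp add: algebra_simps)
  have na: "norm (w - a) = d * n" using wa d0 by (simp add: n_def)
  have nb: "norm (b - w) = d * n" using wb d0 by (simp add: n_def)
  have "a \<in> closed_segment v p" unfolding a_def in_segment using d1 t d0
    by (intro exI[of _ "t-d"]) auto
  moreover have "b \<in> closed_segment v p" unfolding b_def in_segment using d1 t d0
    by (intro exI[of _ "t+d"]) auto
  ultimately have s1: "closed_segment a b \<subseteq> closed_segment v p" by (simp add: subset_closed_segment)
  have "a \<in> ball w \<epsilon>" using na dn by (simp add: dist_norm)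
  moreover have "b \<in> ball w \<epsilon>" using nb dn by (simp add: dist_norm norm_minus_commute)
  ultimately have s2: "closed_segment a b \<subseteq> ball w \<epsilon>" by (simp add: closed_segment_subset)
  have ae: "a = w - d *\<^sub>R (p - v)" using wa by (simp add: algebra_simps)
  have be: "b = w + d *\<^sub>R (p - v)" using wb by (simp add: algebra_simps)
  have hh: "(1/2) *\<^sub>R w + (1/2) *\<^sub>R w = w" by (simp flip: scaleR_left_distrib)
  have wm: "w = (1 - 1/2) *\<^sub>R a + (1/2) *\<^sub>R b" unfolding ae be using hh by (simp add: scaleR_add_right scaleR_diff_right)
  have "w \<in> closed_segment a b" unfolding in_segment by (rule exI[of _ "1/2"]) (use wm in auto)
  moreover have "w \<noteq> a" using na d0 n by auto
  moreover have "w \<noteq> b" using nb d0 n by auto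
  moreover have "a \<noteq> b"
  proof
    assume "a = b"
    hence "w - a = - (b - w)" by simp
    hence "d *\<^sub>R (p - v) = - (d *\<^sub>R (p - v))" using wa wb by simp
    hence "d *\<^sub>R (p - v) + d *\<^sub>R (p - v) = 0" by (simp add: eq_neg_iff_add_eq_0)
    hence "(d + d) *\<^sub>R (p - v) = 0" by (simp only: scaleR_left_distrib)
    thus False using d0 vp by simp
  qed
  ultimately show ?thesis using s1 s2 by blast
qed


lemma cantor_sub: "cantor_set \<subseteq> {0..1}"
  unfolding cantor_set_def by (metis INF_lower2 UNIV_I cantor_level.simps(1) order_refl)

lemma std_point:
  assumes "w \<in> standard_cantor_fan"
  obtains c t where "c \<in> cantor_set" "0 \<le> t" "t \<le> 1" "w = (1-t) *\<^sub>R (1/2, 0) + t *\<^sub>R (c, 1)"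
    "w \<in> closed_segment (1/2, 0) (c, 1)" "snd w = t"
proof -
  obtain c where c: "c \<in> cantor_set" "w \<in> closed_segment (1/2, 0) (c, 1)"
    using assms unfolding standard_cantor_fan_def by blast
  then obtain t where t: "0 \<le> t" "t \<le> 1" "w = (1-t) *\<^sub>R (1/2, 0) + t *\<^sub>R (c, 1)"
    unfolding in_segment by blast
  have "snd w = t" using t(3) by simp
  then show ?thesis using that c t by blast
qed

lemma seg_sub: "c \<in> cantor_set \<Longrightarrow> closed_segment (1/2, 0) (c, 1) \<subseteq> standard_cantor_fan"
  unfolding standard_cantor_fan_def by blast

lemma key_std:
  assumes V: "openin (top_of_set standard_cantor_fan) V" "V \<noteq> {}"
  obtains W where "openin (top_of_set standard_cantor_fan) W" "W \<noteq> {}" "W \<subseteq> V"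
    "\<And>w. w \<in> W \<Longrightarrow> \<exists>a b. a\<noteq>b \<and> closed_segment a b \<subseteq> V \<and> w \<in> closed_segment a b \<and> w \<noteq> a \<and> w \<noteq> b"
proof -
  define S where "S = standard_cantor_fan"
  obtain q where q: "q \<in> V" using V by blast
  have qS: "q \<in> S" using q V openin_imp_subset S_def by blast
  obtain r where r: "r > 0" "\<And>x. x \<in> S \<Longrightarrow> dist x q < r \<Longrightarrow> x \<in> V"
    using V(1) q unfolding openin_euclidean_subtopology_iff S_def by blast
  obtain c t where c: "c \<in> cantor_set" "0 \<le> t" "t \<le> 1" "q = (1-t) *\<^sub>R (1/2, 0) + t *\<^sub>R (c, 1)"
    using std_point[of q] qS S_def by blast
  define s where "s = (if t \<le> 1/2 then t + min (1/4) (r/4) else t - min (1/4) (r/4))"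
  have s01: "0 < s" "s < 1" using c(2,3) r(1) by (auto simp: s_def)
  define q1 where "q1 = (1-s) *\<^sub>R ((1/2, 0)::real\<times>real) + s *\<^sub>R (c, 1)"
  have "q1 \<in> closed_segment (1/2, 0) (c, 1)" unfolding q1_def in_segment
    by (rule exI[of _ s]) (use s01 in auto)
  hence q1S: "q1 \<in> S" using seg_sub[OF c(1)] unfolding S_def by blast
  have q1snd: "snd q1 = s" by (simp add: q1_def)
  have cb: "0 \<le> c" "c \<le> 1" using cantor_sub c(1) by auto
  have qq: "q1 - q = (s - t) *\<^sub>R ((c - 1/2, 1)::real\<times>real)" unfolding q1_def c(4) by (simp add: algebra_simps prod_eq_iff; simp add: field_simps)
  have "dist q1 q = \<bar>s - t\<bar> * norm ((c - 1/2, 1)::real\<times>real)" by (simp only: dist_norm qq norm_scaleR)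
  also have "norm ((c - 1/2, 1)::real\<times>real) \<le> 2"
  proof -
    have "norm ((c - 1/2, 1)::real\<times>real) = sqrt ((c-1/2)^2 + 1)" by (simp add: norm_Pair)
    also have "\<dots> \<le> sqrt 4" proof (intro real_sqrt_le_mono)
      have "(c-1/2)^2 \<le> 1" unfolding abs_square_le_1 using cb by auto
      thus "(c-1/2)^2 + 1 \<le> 4" by simp
    qed
    finally show ?thesis by simp
  qed
  hence "\<bar>s - t\<bar> * norm ((c - 1/2, 1)::real\<times>real) \<le> \<bar>s - t\<bar> * 2" by (simp add: mult_left_mono)
  also have "\<bar>s - t\<bar> * 2 < r" using r(1) by (auto simp: s_def)
  finally have dq1: "dist q1 q < r" .
  define W where "W = S \<inter> ball q1 ((r - dist q1 q)/2) \<inter> {y. 0 < snd y \<and> snd y < 1}"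
  have openW: "openin (top_of_set S) W"
  proof -
    have "open (ball q1 ((r - dist q1 q)/2) \<inter> {y::real\<times>real. 0 < snd y \<and> snd y < 1})"
      by (intro open_Int open_ball) (auto intro!: open_Collect_conj open_Collect_less continuous_intros)
    thus ?thesis unfolding W_def openin_open by (metis inf_assoc)
  qed
  have q1W: "q1 \<in> W" using q1S q1snd s01 dq1 unfolding W_def by auto
  have WV: "W \<subseteq> V"
  proof
    fix x assume "x \<in> W"
    hence "x \<in> S" "dist x q1 < (r - dist q1 q)/2" unfolding W_def by (auto simp: dist_commute)
    moreover have "dist x q \<le> dist x q1 + dist q1 q" by (rule dist_triangle)
    ultimately show "x \<in> V" using r(2) dq1 by auto
  qed
  have arcs: "\<exists>a b. a\<noteq>b \<and> closed_segment a b \<subseteq> V \<and> w \<in> closed_segment a b \<and> w \<noteq> a \<and> w \<noteq> b"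
    if w: "w \<in> W" for w
  proof -
    have wS: "w \<in> S" and wd: "dist w q1 < (r - dist q1 q)/2" and ws: "0 < snd w" "snd w < 1"
      using w unfolding W_def by (auto simp: dist_commute)
    obtain c' t' where c': "c' \<in> cantor_set" "w = (1-t') *\<^sub>R (1/2, 0) + t' *\<^sub>R (c', 1)" "snd w = t'"
      using std_point[of w] wS S_def by blast
    have ne: "((1/2, 0)::real\<times>real) \<noteq> (c', 1)" by simp
    have ep: "(r - dist q1 q)/2 > 0" using dq1 by simp
    obtain a b where ab: "a\<noteq>b" "closed_segment a b \<subseteq> closed_segment (1/2, 0) (c', 1)"
      "closed_segment a b \<subseteq> ball w ((r - dist q1 q)/2)" "w \<in> closed_segment a b" "w \<noteq> a" "w \<noteq> b"
      using seg_interior[OF c'(2) _ _ ep ne] ws c'(3) by auto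
    have "closed_segment a b \<subseteq> W \<union> V"
    proof
      fix x assume x: "x \<in> closed_segment a b"
      hence "x \<in> S" using ab(2) seg_sub[OF c'(1)] S_def by blast
      moreover have "dist x q < r"
      proof -
        have "dist w x < (r - dist q1 q)/2" using x ab(3) by auto
        moreover have "dist x q \<le> dist x w + dist w q1 + dist q1 q"
          using dist_triangle[of x q w] dist_triangle[of w q q1] by linarith
        moreover have "dist x w = dist w x" by (rule dist_commute)
        moreover have aux: "e < r" if "a < (r-d)/2" "e \<le> a + b + d" "b < (r-d)/2" for a b d e :: real
          using that by (simp add: field_simps)
        ultimately show ?thesis using wd aux[of "dist x w" "dist q1 q" "dist x q" "dist w q1"] by simp
      qed
      ultimately show "x \<in> W \<union> V" using r(2) by blast
    qed
    hence "closed_segment a b \<subseteq> V" using WV by blast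
    thus ?thesis using ab by blast
  qed
  have Wne: "W \<noteq> {}" using q1W by blast
  show ?thesis by (rule that[OF openW[unfolded S_def] Wne WV arcs])
qed

theorem mainTheorem3:
  fixes C L :: "'a::metric_space set"
  assumes "cantor_fan C"
    and "L \<subseteq> C"
    and "continuum L"
    and "lelek_fan L"
  shows "(top_of_set C) interior_of ((top_of_set C) closure_of L) = {}"
proof (rule ccontr)
  define S where "S = standard_cantor_fan"
  assume ne: "(top_of_set C) interior_of ((top_of_set C) closure_of L) \<noteq> {}"
  have "closed L" using assms(3) compact_imp_closed unfolding continuum_def by blast
  hence "closedin (top_of_set C) L" using assms(2) by (simp add: closed_subset)
  hence cl: "(top_of_set C) closure_of L = L" by (simp add: closure_of_eq)
  obtain U where U: "openin (top_of_set C) U" "U \<noteq> {}" "U \<subseteq> L"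
    using ne unfolding cl interior_of_def by blast
  have "C homeomorphic S" using assms(1) unfolding cantor_fan_def S_def .
  then obtain f g where h: "homeomorphism C S f g" unfolding homeomorphic_def by (elim exE)
  have hg: "homeomorphism S C g f" using h by (rule homeomorphism_symD)
  have UC: "U \<subseteq> C" using U(1) openin_imp_subset by blast
  have oV: "openin (top_of_set S) (f ` U)" by (rule homeomorphism_imp_open_map[OF h U(1)])
  obtain W where W: "openin (top_of_set S) W" "W \<noteq> {}" "W \<subseteq> f ` U"
    "\<And>w. w \<in> W \<Longrightarrow> \<exists>a b. a\<noteq>b \<and> closed_segment a b \<subseteq> f ` U \<and> w \<in> closed_segment a b \<and> w \<noteq> a \<and> w \<noteq> b"
    using key_std[OF oV[unfolded S_def]] U(2) unfolding S_def by blast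
  have gfx: "\<And>x. x \<in> U \<Longrightarrow> g (f x) = x" using UC homeomorphism_apply1[OF h] by blast
  have "(\<lambda>x. g (f x)) ` U = (\<lambda>x. x) ` U" by (rule image_cong) (simp_all add: gfx)
  hence gfU: "g ` f ` U = U" by (simp add: image_image)
  have fUS: "f ` U \<subseteq> S" using oV openin_imp_subset by blast
  have oW': "openin (top_of_set C) (g ` W)" by (rule homeomorphism_imp_open_map[OF hg W(1)])
  have W'L: "g ` W \<subseteq> L" using W(3) gfU U(3) by blast
  have oWL: "openin (top_of_set L) (g ` W)" using openin_subset_trans[OF oW' W'L assms(2)] .
  then obtain Ob where Ob: "open Ob" "g ` W = L \<inter> Ob" unfolding openin_open by blast
  have dense: "closure (end_points L) = L" using assms(4) unfolding lelek_fan_def by blast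
  have "Ob \<inter> closure (end_points L) \<noteq> {}" using Ob W(2) dense by auto
  hence "Ob \<inter> end_points L \<noteq> {}" using open_Int_closure_eq_empty[OF Ob(1)] by blast
  moreover have "end_points L \<subseteq> L" unfolding end_points_def by blast
  ultimately obtain e where e: "e \<in> end_points L" "e \<in> g ` W" using Ob by blast
  then obtain w where w: "w \<in> W" "e = g w" by blast
  obtain a b where ab: "a\<noteq>b" "closed_segment a b \<subseteq> f ` U" "w \<in> closed_segment a b" "w \<noteq> a" "w \<noteq> b"
    using W(4)[OF w(1)] by blast
  define \<gamma> where "\<gamma> = g \<circ> linepath a b"
  have injg: "inj_on g S"
  proof (rule inj_onI)
    fix x y assume "x \<in> S" "y \<in> S" "g x = g y"
    thus "x = y" using homeomorphism_apply2[OF h] by metis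
  qed
  have contg: "continuous_on S g" using hg homeomorphism_def by blast
  have abS: "closed_segment a b \<subseteq> S" using ab(2) fUS by blast
  have "arc \<gamma>"
  proof -
    have img: "linepath a b ` {0..1} = closed_segment a b"
      using path_image_linepath[of a b] unfolding path_image_def .
    have cg: "continuous_on (linepath a b ` {0..1}) g" unfolding img
      by (rule continuous_on_subset[OF contg abS])
    have "path \<gamma>" unfolding \<gamma>_def path_def
      by (rule continuous_on_compose[OF path_linepath[unfolded path_def] cg])
    moreover have "inj_on \<gamma> {0..1}" unfolding \<gamma>_def
      by (rule comp_inj_on[OF arc_imp_inj_on[OF arc_linepath[OF ab(1)]]]) (unfold img, rule inj_on_subset[OF injg abS])
    ultimately show ?thesis by (simp add: arc_def)
  qed
  have pim: "path_image \<gamma> = g ` closed_segment a b" unfolding \<gamma>_def by (simp add: path_image_compose)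
  have "path_image \<gamma> \<subseteq> L" using pim ab(2) gfU U(3) by blast
  hence "arc_in L \<gamma>" using \<open>arc \<gamma>\<close> by (simp add: arc_in_def)
  moreover have "e \<in> path_image \<gamma>" using pim ab(3) w(2) by blast
  ultimately have "e = pathstart \<gamma> \<or> e = pathfinish \<gamma>" using e(1) unfolding end_points_def by blast
  moreover have "pathstart \<gamma> = g a" "pathfinish \<gamma> = g b" unfolding \<gamma>_def by (simp_all add: pathstart_def pathfinish_def linepath_def)
  moreover have wS: "w \<in> S" "a \<in> S" "b \<in> S" using abS ab(3) ends_in_segment[of a b] by auto
  moreover have "g w \<noteq> g a" using inj_onD[OF injg _ wS(1) wS(2)] ab(4) by blast
  moreover have "g w \<noteq> g b" using inj_onD[OF injg _ wS(1) wS(3)] ab(5) by blast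
  ultimately show False using w(2) by auto
qed

end
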